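(* Let $d\ge1$, let $y=(y_S)_{S\in\mathcal{V}_{n,2d}}$ be a vector over $\mathbb{F}_q$, and let $0\le e\le d-1$ with $r_e=r_{e+1}$. Let $\mathcal{I}\subseteq\mathcal{V}_{n,e}$ be such that the vectors $\{\mathbf{c}_e(B):B\in\mathcal{I}\}$ form a basis of $C_e$. Then for every $i\in[n]$ there is a linear map $T_i:C_e\to C_e$ with $T_i\mathbf{c}_e(B)=\mathbf{c}_e(B\cup\{i\})$ for every $B\in\mathcal{I}$. Moreover, for every $A\in\mathcal{V}_{n,e+1}$ and every $i\in[n]$, the vector $\mathbf{c}_e(A)$ lies in $C_e$ and $T_i\mathbf{c}_e(A)=\mathbf{c}_e(A\cup\{i\})$.
   Context: $\mathbb{F}_q$ is a finite field. $\mathcal{V}_{n,j}:=\{S\subseteq\{1,\dots,n\}:0\le|S|\le j\}$ (including $\emptyset$). For $0\le e\le d$, $H_e(y)$ is the matrix with rows and columns indexed by $\mathcal{V}_{n,e}$ and $(S,T)$ entry $y_{S\cup T}$; $r_e:=\operatorname{rank}H_e(y)$; $C_e$ is the column space of $H_e(y)$. For $A\subseteq[n]$ with $|A|\le2d-e$, the truncated column is $\mathbf{c}_e(A):=(y_{R\cup A})_{R\in\mathcal{V}_{n,e}}\in\mathbb{F}_q^{\mathcal{V}_{n,e}}$. *)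

theory Defs
  imports Complex_Main "HOL-Library.Function_Algebras"
begin

definition scl :: "'a::field \<Rightarrow> (nat set \<Rightarrow> 'a) \<Rightarrow> (nat set \<Rightarrow> 'a)" where
  "scl c v = (\<lambda>R. c * v R)"

definition Vset :: "nat \<Rightarrow> nat \<Rightarrow> nat set set" where
  "Vset n j = {S. S \<subseteq> {1..n} \<and> card S \<le> j}"

text \<open>Truncated column c_e(A) = (y_(R union A)) for R in V_{n,e}; zero outside V_{n,e}.
  Note that column T of H_e(y) is exactly colvec n e y T.\<close>
definition colvec :: "nat \<Rightarrow> nat \<Rightarrow> (nat set \<Rightarrow> 'a::field) \<Rightarrow> nat set \<Rightarrow> (nat set \<Rightarrow> 'a)" where
  "colvec n e y A = (\<lambda>R. if R \<in> Vset n e then y (R \<union> A) else 0)"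

definition colspace :: "nat \<Rightarrow> nat \<Rightarrow> (nat set \<Rightarrow> 'a::field) \<Rightarrow> (nat set \<Rightarrow> 'a) set" where
  "colspace n e y = module.span scl (colvec n e y ` Vset n e)"

definition hrank :: "nat \<Rightarrow> nat \<Rightarrow> (nat set \<Rightarrow> 'a::field) \<Rightarrow> nat" where
  "hrank n e y = vector_space.dim scl (colspace n e y)"

end

theory Submission
  imports Defs
begin

lemma vs_scl: "vector_space (scl :: 'a::field \<Rightarrow> (nat set \<Rightarrow> 'a) \<Rightarrow> _)"
  by unfold_locales (auto simp: scl_def fun_eq_iff algebra_simps)

definition restr :: "nat set set \<Rightarrow> (nat set \<Rightarrow> 'a::field) \<Rightarrow> (nat set \<Rightarrow> 'a)" where
  "restr V v = (\<lambda>R. if R \<in> V then v R else 0)"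

definition shft :: "nat \<Rightarrow> (nat set \<Rightarrow> 'a::field) \<Rightarrow> (nat set \<Rightarrow> 'a)" where
  "shft i v = (\<lambda>R. v (R \<union> {i}))"

lemma restr_hom: "module_hom (scl :: 'a::field \<Rightarrow> _) scl (restr V)"
proof -
  have m: "module (scl :: 'a \<Rightarrow> _)" using vs_scl[where 'a='a] by (simp add: module_iff_vector_space)
  show ?thesis unfolding module_hom_iff
    using m by (auto simp: restr_def scl_def fun_eq_iff)
qed

lemma shft_hom: "module_hom (scl :: 'a::field \<Rightarrow> _) scl (shft i)"
proof -
  have m: "module (scl :: 'a \<Rightarrow> _)" using vs_scl[where 'a='a] by (simp add: module_iff_vector_space)
  show ?thesis unfolding module_hom_iff
    using m by (auto simp: shft_def scl_def fun_eq_iff)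
qed

lemma lift_indep:
  fixes f :: "(nat set \<Rightarrow> 'a::field) \<Rightarrow> (nat set \<Rightarrow> 'a)"
  assumes h: "module_hom scl scl f" and ind: "\<not> module.dependent scl (f ` S)"
    and inj: "inj_on f S"
  shows "\<not> module.dependent scl S"
proof
  interpret vs: vector_space "scl :: 'a \<Rightarrow> _" by (rule vs_scl)
  interpret h: module_hom "scl :: 'a \<Rightarrow> _" scl f by (rule h)
  assume "vs.dependent S"
  then obtain a where a: "a \<in> S" "a \<in> vs.span (S - {a})" by (auto simp: vs.dependent_def)
  then have "f a \<in> vs.span (f ` (S - {a}))" using h.span_image by blast
  moreover have "f ` (S - {a}) = f ` S - {f a}" using inj a(1) by (auto simp: inj_on_def)
  ultimately have "vs.dependent (f ` S)" using a(1) by (auto simp: vs.dependent_def)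
  then show False using ind by simp
qed

lemma finite_Vset: "finite (Vset n j)"
proof -
  have "Vset n j \<subseteq> Pow {1..n}" by (auto simp: Vset_def)
  then show ?thesis by (rule finite_subset) simp
qed

theorem lemma4p4:
  fixes y :: "nat set \<Rightarrow> 'a::{field,finite}"
    and n d e :: nat and I :: "nat set set"
  assumes "d \<ge> 1"
    and "e \<le> d - 1"
    and "hrank n e y = hrank n (e + 1) y"
    and "I \<subseteq> Vset n e"
    and "inj_on (colvec n e y) I"
    and "\<not> module.dependent scl (colvec n e y ` I)"
    and "module.span scl (colvec n e y ` I) = colspace n e y"
  shows "(\<forall>A \<in> Vset n (e + 1). colvec n e y A \<in> colspace n e y) \<and>
    (\<forall>i \<in> {1..n}. \<exists>T :: (nat set \<Rightarrow> 'a) \<Rightarrow> (nat set \<Rightarrow> 'a).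
        (\<forall>v \<in> colspace n e y. T v \<in> colspace n e y) \<and>
        (\<forall>u \<in> colspace n e y. \<forall>v \<in> colspace n e y. T (u + v) = T u + T v) \<and>
        (\<forall>c. \<forall>v \<in> colspace n e y. T (scl c v) = scl c (T v)) \<and>
        (\<forall>B \<in> I. T (colvec n e y B) = colvec n e y (B \<union> {i})) \<and>
        (\<forall>A \<in> Vset n (e + 1). T (colvec n e y A) = colvec n e y (A \<union> {i})))"
proof -
  interpret vs: vector_space "scl :: 'a \<Rightarrow> _" by (rule vs_scl)
  define V where "V = Vset n e"
  define W where "W = Vset n (e+1)"
  define ce where "ce = colvec n e y"
  define c1 where "c1 = colvec n (e+1) y"
  define Ce where "Ce = colspace n e y"
  define C1 where "C1 = colspace n (e+1) y"
  interpret hP: module_hom "scl :: 'a \<Rightarrow> _" scl "restr V" by (rule restr_hom)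
  have VW: "V \<subseteq> W" by (auto simp: V_def W_def Vset_def)
  have IW: "I \<subseteq> W" using assms(4) VW V_def by auto
  have finI: "finite I" using assms(4) finite_Vset finite_subset by blast
  have rc: "restr V (c1 A) = ce A" for A
    using VW by (auto simp: restr_def c1_def ce_def colvec_def fun_eq_iff V_def W_def)
  have C1def: "C1 = vs.span (c1 ` W)" by (simp add: C1_def colspace_def c1_def W_def)
  have indI: "vs.independent (ce ` I)" using assms(6) ce_def by simp
  have spI: "vs.span (ce ` I) = Ce" using assms(7) ce_def Ce_def by simp
  have injce: "inj_on ce I" using assms(5) ce_def by simp
  have dimCe: "vs.dim Ce = card I"
    using vs.dim_span_eq_card_independent[OF indI] spI card_image[OF injce] by simp
  have dimC1: "vs.dim C1 = card I"
    using dimCe assms(3) by (simp add: hrank_def Ce_def C1_def)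
  have imgI: "restr V ` (c1 ` I) = ce ` I" using rc by (auto simp: image_image)
  have injP: "inj_on (restr V) (c1 ` I)"
    using injce rc by (auto simp: inj_on_def)
  have injc1: "inj_on c1 I"
    unfolding inj_on_def using injce rc by (metis inj_onD)
  have ind1: "vs.independent (c1 ` I)"
    using lift_indep[OF restr_hom, of V "c1 ` I"] imgI indI injP by simp
  have c1W: "c1 ` I \<subseteq> C1" using IW C1def vs.span_superset by blast
  have bound: "card B \<le> card I" if "vs.independent B" "B \<subseteq> C1" for B
  proof -
    obtain J where J: "J \<subseteq> C1" "vs.independent J" "C1 \<subseteq> vs.span J" "card J = vs.dim C1"
      by (rule vs.basis_exists)
    have "finite J" using vs.independent_span_bound[of "c1 ` W" J] J finite_Vset W_def C1def by auto
    then show ?thesis using vs.independent_span_bound[of J B] that J dimC1 by auto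
  qed
  have C1I: "C1 = vs.span (c1 ` I)"
  proof
    show "vs.span (c1 ` I) \<subseteq> C1" using c1W C1def vs.span_minimal vs.subspace_span by blast
    show "C1 \<subseteq> vs.span (c1 ` I)"
    proof
      fix v assume v: "v \<in> C1"
      show "v \<in> vs.span (c1 ` I)"
      proof (rule ccontr)
        assume nv: "v \<notin> vs.span (c1 ` I)"
        then have "vs.independent (insert v (c1 ` I))" using vs.independent_insertI ind1 by blast
        moreover have "insert v (c1 ` I) \<subseteq> C1" using v c1W by auto
        ultimately have "card (insert v (c1 ` I)) \<le> card I" using bound by blast
        moreover have "v \<notin> c1 ` I" using nv vs.span_superset by blast
        ultimately show False using card_image[OF injc1] finI by simp
      qed
    qed
  qed
  have injC1: "inj_on (restr V) C1"
    using hP.inj_on_span_independent_image[of "c1 ` I"] imgI indI injP C1I by simp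
  have CeC1: "Ce = restr V ` C1"
    using hP.span_image[of "c1 ` I"] imgI spI C1I by simp
  have claim1: "\<forall>A \<in> W. ce A \<in> Ce"
  proof
    fix A assume "A \<in> W"
    then have "c1 A \<in> C1" using C1def vs.span_superset by blast
    then show "ce A \<in> Ce" using CeC1 rc by (metis image_eqI)
  qed
  define L where "L = the_inv_into C1 (restr V)"
  have L1: "L v \<in> C1" if "v \<in> Ce" for v
    using the_inv_into_into[OF injC1] that CeC1 L_def by auto
  have L2: "restr V (L v) = v" if "v \<in> Ce" for v
    using f_the_inv_into_f[OF injC1] that CeC1 L_def by auto
  have L3: "L w = u" if "u \<in> C1" "restr V u = w" for u w
    using the_inv_into_f_eq[OF injC1] that L_def by auto
  have Lc: "L (ce A) = c1 A" if "A \<in> W" for A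
    using L3 rc that C1def vs.span_superset by blast
  have Ladd: "L (u + v) = L u + L v" if "u \<in> Ce" "v \<in> Ce" for u v
    using L3[of "L u + L v" "u + v"] L1 L2 that C1def vs.span_add hP.add by metis
  have Lscl: "L (scl c v) = scl c (L v)" if "v \<in> Ce" for c v
    using L3[of "scl c (L v)" "scl c v"] L1 L2 that C1def vs.span_scale hP.scale by metis
  have claim2: "\<exists>T :: (nat set \<Rightarrow> 'a) \<Rightarrow> (nat set \<Rightarrow> 'a).
        (\<forall>v \<in> Ce. T v \<in> Ce) \<and>
        (\<forall>u \<in> Ce. \<forall>v \<in> Ce. T (u + v) = T u + T v) \<and>
        (\<forall>c. \<forall>v \<in> Ce. T (scl c v) = scl c (T v)) \<and>
        (\<forall>B \<in> I. T (ce B) = ce (B \<union> {i})) \<and>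
        (\<forall>A \<in> W. T (ce A) = ce (A \<union> {i}))" if i: "i \<in> {1..n}" for i
  proof -
    interpret hS: module_hom "scl :: 'a \<Rightarrow> _" scl "shft i" by (rule shft_hom)
    interpret hF: module_hom "scl :: 'a \<Rightarrow> _" scl "restr V \<circ> shft i"
      by (rule module_hom_compose[OF shft_hom restr_hom])
    define T where "T v = restr V (shft i (L v))" for v
    have Tc: "restr V (shft i (c1 A)) = ce (A \<union> {i})" for A
    proof
      fix R
      show "restr V (shft i (c1 A)) R = ce (A \<union> {i}) R"
      proof (cases "R \<in> V")
        case True
        then have "R \<subseteq> {1..n}" "card R \<le> e" by (auto simp: V_def Vset_def)
        moreover have "finite R" using \<open>R \<subseteq> {1..n}\<close> finite_subset by blast
        ultimately have "R \<union> {i} \<in> Vset n (e+1)" using i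
          by (auto simp: Vset_def card_insert_if)
        then show ?thesis using True
          by (auto simp: restr_def shft_def c1_def ce_def colvec_def V_def Un_ac)
      next
        case False
        then show ?thesis by (auto simp: restr_def ce_def colvec_def V_def)
      qed
    qed
    have TA: "\<forall>A \<in> W. T (ce A) = ce (A \<union> {i})" using Tc Lc T_def by simp
    have TI: "\<forall>B \<in> I. T (ce B) = ce (B \<union> {i})" using TA IW by auto
    have Tin: "\<forall>v \<in> Ce. T v \<in> Ce"
    proof
      fix v assume v: "v \<in> Ce"
      have "L v \<in> vs.span (c1 ` I)" using L1[OF v] C1I by simp
      then have "(restr V \<circ> shft i) (L v) \<in> vs.span ((restr V \<circ> shft i) ` (c1 ` I))"
        using hF.spans_image[of "{L v}" "c1 ` I"] by auto
      moreover have "(restr V \<circ> shft i) ` (c1 ` I) \<subseteq> Ce"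
      proof
        fix x assume "x \<in> (restr V \<circ> shft i) ` (c1 ` I)"
        then obtain B where B: "B \<in> I" "x = ce (B \<union> {i})" using Tc by auto
        have "B \<subseteq> {1..n}" "card B \<le> e" using B(1) assms(4) by (auto simp: Vset_def)
        moreover have "finite B" using \<open>B \<subseteq> {1..n}\<close> finite_subset by blast
        ultimately have "B \<union> {i} \<in> W" using i by (auto simp: W_def Vset_def card_insert_if)
        then show "x \<in> Ce" using claim1 B by simp
      qed
      then have "vs.span ((restr V \<circ> shft i) ` (c1 ` I)) \<subseteq> Ce"
        using vs.span_minimal[of _ Ce] spI vs.subspace_span by metis
      ultimately show "T v \<in> Ce" by (auto simp: T_def)
    qed
    have Tadd: "\<forall>u \<in> Ce. \<forall>v \<in> Ce. T (u + v) = T u + T v"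
      using Ladd hS.add hP.add by (simp add: T_def)
    have Tscl: "\<forall>c. \<forall>v \<in> Ce. T (scl c v) = scl c (T v)"
      using Lscl hS.scale hP.scale by (simp add: T_def)
    show ?thesis using Tin Tadd Tscl TI TA by blast
  qed
  show ?thesis using claim1 claim2 by (simp add: W_def ce_def Ce_def)
qed

end
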